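(* Let $H$ be a Hermitian $n\times n$ matrix (e.g. the adjacency matrix of an undirected graph on $n$ vertices) and let $\omega\in(0,1]$. Consider the evolution $$\frac{d}{dt}\varrho=-\mathrm i(1-\omega)[H,\varrho]+\omega\Big(H\varrho H^\dagger-\tfrac12\{H^\dagger H,\varrho\}\Big),$$ i.e. the GKSL equation with the single Lindblad operator $H$. Then: (i) its stationary states are exactly the stationary states of the pure Hamiltonian evolution $\frac{d}{dt}\varrho=-\mathrm i[H,\varrho]$ (i.e. the density matrices commuting with $H$); (ii) the evolution is convergent, i.e. for every initial density matrix $\varrho_0$ the limit $\lim_{t\to\infty}\varrho_t$ exists; (iii) the evolution is not relaxing (has more than one stationary state) if and only if $n>1$.
   Context: A stationary state is a density matrix $\varrho$ for which the right-hand side vanishes. The evolution is relaxing if there is a unique stationary state. $\{A,B\}=AB+BA$. *)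

theory Defs
  imports "HOL-Analysis.Analysis"
begin

text \<open>Complex n x n matrices are modelled as complex^'n^'n, with n = CARD('n).\<close>

definition cadj :: "complex^'n^'n \<Rightarrow> complex^'n^'n" where
  "cadj A = (\<chi> i j. cnj (A $ j $ i))"

definition hermitian :: "complex^'n^'n \<Rightarrow> bool" where
  "hermitian A \<longleftrightarrow> cadj A = A"

definition cscale :: "complex \<Rightarrow> complex^'n^'n \<Rightarrow> complex^'n^'n" where
  "cscale c A = (\<chi> i j. c * A $ i $ j)"

definition mtrace :: "complex^'n^'n \<Rightarrow> complex" where
  "mtrace A = (\<Sum>i\<in>UNIV. A $ i $ i)"

definition psd :: "complex^'n^'n \<Rightarrow> bool" where
  "psd A \<longleftrightarrow> hermitian A \<and>
     (\<forall>x :: complex^'n. 0 \<le> Re (\<Sum>i\<in>UNIV. \<Sum>j\<in>UNIV. cnj (x $ i) * A $ i $ j * x $ j))"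

definition density_matrix :: "complex^'n^'n \<Rightarrow> bool" where
  "density_matrix \<rho> \<longleftrightarrow> psd \<rho> \<and> mtrace \<rho> = 1"

definition commutator :: "complex^'n^'n \<Rightarrow> complex^'n^'n \<Rightarrow> complex^'n^'n" where
  "commutator A B = A ** B - B ** A"

definition anticommutator :: "complex^'n^'n \<Rightarrow> complex^'n^'n \<Rightarrow> complex^'n^'n" where
  "anticommutator A B = A ** B + B ** A"

text \<open>Right-hand side of the GKSL equation with Hamiltonian (1-\<omega>)H and single
  Lindblad operator sqrt(\<omega>) H.\<close>
definition gksl :: "real \<Rightarrow> complex^'n^'n \<Rightarrow> complex^'n^'n \<Rightarrow> complex^'n^'n" where
  "gksl \<omega> H \<rho> =
     cscale (- \<i> * complex_of_real (1 - \<omega>)) (commutator H \<rho>)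
     + cscale (complex_of_real \<omega>)
         (H ** \<rho> ** cadj H - cscale (1/2) (anticommutator (cadj H ** H) \<rho>))"

definition hamiltonian_rhs :: "complex^'n^'n \<Rightarrow> complex^'n^'n \<Rightarrow> complex^'n^'n" where
  "hamiltonian_rhs H \<rho> = cscale (- \<i>) (commutator H \<rho>)"

definition stationary_state :: "(complex^'n^'n \<Rightarrow> complex^'n^'n) \<Rightarrow> complex^'n^'n \<Rightarrow> bool" where
  "stationary_state L \<rho> \<longleftrightarrow> density_matrix \<rho> \<and> L \<rho> = 0"

definition solution :: "(complex^'n^'n \<Rightarrow> complex^'n^'n) \<Rightarrow> complex^'n^'n
     \<Rightarrow> (real \<Rightarrow> complex^'n^'n) \<Rightarrow> bool" where
  "solution L \<rho>0 \<rho> \<longleftrightarrow> \<rho> 0 = \<rho>0 \<and>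
     (\<forall>t\<ge>0. (\<rho> has_vector_derivative L (\<rho> t)) (at t within {0..}))"

end

theory Submission
  imports Defs
begin

typedef (overloaded) ('a::euclidean_space) endo = "UNIV :: ('a \<Rightarrow>\<^sub>L 'a) set" by simp

setup_lifting type_definition_endo

instantiation endo :: (euclidean_space) real_normed_algebra_1
begin
lift_definition norm_endo :: "'a endo \<Rightarrow> real" is norm .
lift_definition plus_endo :: "'a endo \<Rightarrow> 'a endo \<Rightarrow> 'a endo" is "(+)" .
lift_definition minus_endo :: "'a endo \<Rightarrow> 'a endo \<Rightarrow> 'a endo" is "(-)" .
lift_definition uminus_endo :: "'a endo \<Rightarrow> 'a endo" is uminus .
lift_definition zero_endo :: "'a endo" is 0 .
lift_definition scaleR_endo :: "real \<Rightarrow> 'a endo \<Rightarrow> 'a endo" is scaleR .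
lift_definition times_endo :: "'a endo \<Rightarrow> 'a endo \<Rightarrow> 'a endo" is "(o\<^sub>L)" .
lift_definition one_endo :: "'a endo" is id_blinfun .
definition dist_endo :: "'a endo \<Rightarrow> 'a endo \<Rightarrow> real" where "dist_endo a b = norm (a - b)"
definition uniformity_endo :: "('a endo \<times> 'a endo) filter" where
  "uniformity_endo = (INF e\<in>{0 <..}. principal {(x, y). dist x y < e})"
definition open_endo :: "'a endo set \<Rightarrow> bool" where
  "open_endo S = (\<forall>x\<in>S. \<forall>\<^sub>F (x', y) in uniformity. x' = x \<longrightarrow> y \<in> S)"
definition sgn_endo :: "'a endo \<Rightarrow> 'a endo" where "sgn_endo x = scaleR (inverse (norm x)) x"

lemma dist_endo_Rep: "dist (a::'a endo) b = dist (Rep_endo a) (Rep_endo b)"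
  unfolding dist_endo_def dist_norm by transfer simp

instance
  apply standard
  apply (simp_all only: dist_endo_def open_endo_def sgn_endo_def uniformity_endo_def)
  using norm_blinfun_id[where 'a='a]
  by (transfer, auto intro!: blinfun_eqI simp: algebra_simps blinfun.bilinear_simps norm_triangle_ineq
     norm_blinfun_compose)+
end

instance endo :: (euclidean_space) banach
proof
  fix X :: "nat \<Rightarrow> 'a endo"
  assume "Cauchy X"
  then have "Cauchy (\<lambda>n. Rep_endo (X n))"
    unfolding Cauchy_def dist_endo_Rep by simp
  then obtain l where l: "(\<lambda>n. Rep_endo (X n)) \<longlonglongrightarrow> l"
    using Cauchy_convergent_iff convergent_def by blast
  have "X \<longlonglongrightarrow> Abs_endo l"
    using l unfolding lim_sequentially dist_endo_Rep by (simp add: Abs_endo_inverse)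
  then show "convergent X" by (auto simp: convergent_def)
qed

definition app :: "'a::euclidean_space endo \<Rightarrow> 'a \<Rightarrow> 'a" where
  "app A x = blinfun_apply (Rep_endo A) x"

lemma app_times: "app (A * B) x = app A (app B x)"
  unfolding app_def by transfer simp

lemma bounded_linear_app_left: "bounded_linear (\<lambda>A. app A x)"
  by (rule bounded_linear_intro[where K="norm x"])
    (auto simp: app_def plus_endo.rep_eq scaleR_endo.rep_eq blinfun.bilinear_simps
      norm_endo.rep_eq norm_blinfun mult.commute[of "norm x"])

lemma app_one: "app 1 x = x"
  unfolding app_def by transfer simp

lemma linear_ode_exists:
  fixes T :: "'a::euclidean_space \<Rightarrow> 'a"
  assumes T: "bounded_linear T"
  shows "\<exists>\<rho>. \<rho> 0 = x0 \<and> (\<forall>t. (\<rho> has_vector_derivative T (\<rho> t)) (at t within S))"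
proof -
  define A where "A = Abs_endo (Blinfun T)"
  have appA: "app A x = T x" for x
    unfolding A_def app_def by (simp add: Abs_endo_inverse bounded_linear_Blinfun_apply[OF T])
  define \<rho> where "\<rho> t = app (exp (t *\<^sub>R A)) x0" for t
  have "(\<rho> has_vector_derivative T (\<rho> t)) (at t within S)" for t
  proof -
    have "((\<lambda>t. app (exp (t *\<^sub>R A)) x0) has_vector_derivative app (exp (t *\<^sub>R A) * A) x0) (at t within S)"
      by (rule bounded_linear.has_vector_derivative[OF bounded_linear_app_left
            exp_scaleR_has_vector_derivative_right])
    also have "app (exp (t *\<^sub>R A) * A) x0 = T (\<rho> t)"
      unfolding \<rho>_def exp_times_scaleR_commute app_times appA ..
    finally show ?thesis unfolding \<rho>_def .
  qed
  moreover have "\<rho> 0 = x0" unfolding \<rho>_def by (simp add: app_one)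
  ultimately show ?thesis by blast
qed

lemma exp_decay_tendsto:
  fixes k C :: real assumes "k > 0"
  shows "((\<lambda>x. C * exp (- k * x)) \<longlongrightarrow> 0) at_top"
proof -
  have "filterlim (\<lambda>x. k * x) at_top at_top"
    by (rule filterlim_tendsto_pos_mult_at_top[OF tendsto_const assms filterlim_ident])
  then have "filterlim (\<lambda>x. - (k * x)) at_bot at_top"
    by (simp add: filterlim_uminus_at_bot)
  then have "((\<lambda>x. exp (- (k * x))) \<longlongrightarrow> 0) at_top"
    by (rule filterlim_compose[OF exp_at_bot])
  then show ?thesis by (auto intro: tendsto_mult_right_zero)
qed

lemma gronwall_decay:
  fixes f f' :: "real \<Rightarrow> real"
  assumes d: "\<And>t. t \<ge> 0 \<Longrightarrow> (f has_real_derivative f' t) (at t within {0..})"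
    and le: "\<And>t. t \<ge> 0 \<Longrightarrow> f' t \<le> - k * f t" and t: "t \<ge> 0"
  shows "f t \<le> f 0 * exp (- k * t)"
proof -
  define h where "h x = exp (k * x) * f x" for x
  define h' where "h' x = exp (k * x) * (k * f x + f' x)" for x
  have "(h has_vector_derivative h' x) (at x within {0..t})" if "x \<in> {0..t}" for x
  proof -
    have "(f has_real_derivative f' x) (at x within {0..t})"
      using d[of x] that by (auto intro: DERIV_subset)
    then have "(h has_real_derivative (exp (k * x) * k * f x + exp (k * x) * f' x)) (at x within {0..t})"
      unfolding h_def by (auto intro!: derivative_eq_intros)
    then show ?thesis unfolding has_real_derivative_iff_has_vector_derivative h'_def
      by (simp add: algebra_simps)
  qed
  then have "(h' has_integral (h t - h 0)) {0..t}"
    using t by (intro fundamental_theorem_of_calculus) auto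
  moreover have "h' x \<le> 0" if "x \<in> {0..t}" for x
    using le[of x] that unfolding h'_def by (auto intro!: mult_nonneg_nonpos)
  ultimately have "h t - h 0 \<le> 0"
    using has_integral_le[of h' "h t - h 0" "{0..t}" "\<lambda>_. 0" 0] by auto
  then have "exp (k * t) * f t \<le> f 0" unfolding h_def by simp
  then have "f t \<le> f 0 / exp (k * t)" by (simp add: pos_le_divide_eq mult.commute)
  then show ?thesis by (simp add: exp_minus divide_inverse)
qed

lemma integral_tail_bound:
  fixes \<rho> :: "real \<Rightarrow> 'a::banach"
  assumes d: "\<And>x. x \<ge> 0 \<Longrightarrow> (\<rho> has_vector_derivative \<rho>' x) (at x within {0..})"
    and b: "\<And>x. x \<ge> 0 \<Longrightarrow> norm (\<rho>' x) \<le> M * exp (- k * x)"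
    and k: "k > 0" and M: "M \<ge> 0" and st: "0 \<le> s" "s \<le> t"
  shows "norm (\<rho> t - \<rho> s) \<le> M / k * exp (- k * s)"
proof -
  have "(\<rho>' has_integral (\<rho> t - \<rho> s)) {s..t}"
    using st by (intro fundamental_theorem_of_calculus)
      (auto intro: has_vector_derivative_within_subset[OF d])
  moreover
  define G where "G x = - (M / k) * exp (- k * x)" for x
  have "((\<lambda>x. M * exp (- k * x)) has_integral (G t - G s)) {s..t}"
  proof (intro fundamental_theorem_of_calculus[OF st(2)])
    fix x assume "x \<in> {s..t}"
    have "(G has_real_derivative (- (M / k) * (exp (- k * x) * (- k)))) (at x within {s..t})"
      unfolding G_def by (auto intro!: derivative_eq_intros)
    then show "(G has_vector_derivative M * exp (- k * x)) (at x within {s..t})"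
      unfolding has_real_derivative_iff_has_vector_derivative using k by simp
  qed
  ultimately have "norm (integral {s..t} \<rho>') \<le> integral {s..t} (\<lambda>x. M * exp (- k * x))"
    using st by (intro integral_norm_bound_integral b) auto
  also have "\<dots> = G t - G s" using \<open>(_ has_integral (G t - G s)) _\<close> by (rule integral_unique)
  also have "\<dots> \<le> M / k * exp (- k * s)"
    unfolding G_def using k M by (simp add: algebra_simps)
  finally show ?thesis using \<open>(\<rho>' has_integral _) _\<close> integral_unique by metis
qed

lemma converges_from_tail:
  fixes \<rho> :: "real \<Rightarrow> 'a::banach"
  assumes tail: "\<And>s t. 0 \<le> s \<Longrightarrow> s \<le> t \<Longrightarrow> norm (\<rho> t - \<rho> s) \<le> C * exp (- k * s)"
    and k: "k > 0"
  shows "\<exists>l. (\<rho> \<longlongrightarrow> l) at_top"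
proof -
  have lim0: "((\<lambda>n. C * exp (- k * real n)) \<longlongrightarrow> 0) sequentially"
    by (rule filterlim_compose[OF exp_decay_tendsto[OF k] filterlim_real_sequentially])
  have "Cauchy (\<lambda>n. \<rho> (real n))"
  proof (rule metric_CauchyI)
    fix e :: real assume e: "e > 0"
    then have "\<forall>\<^sub>F n in sequentially. C * exp (- k * real n) < e / 2"
      using lim0 by (auto simp: tendsto_iff dist_real_def abs_less_iff
          dest!: spec[of _ "e/2"] elim: eventually_mono)
    then obtain N where N: "C * exp (- k * real N) < e / 2"
      by (auto simp: eventually_sequentially)
    show "\<exists>M. \<forall>m\<ge>M. \<forall>n\<ge>M. dist (\<rho> (real m)) (\<rho> (real n)) < e"
    proof (intro exI allI impI)
      fix m n assume mn: "N \<le> m" "N \<le> n"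
      have "dist (\<rho> (real m)) (\<rho> (real n)) \<le> norm (\<rho> (real m) - \<rho> (real N)) + norm (\<rho> (real n) - \<rho> (real N))"
        by (metis dist_norm dist_triangle2)
      also have "\<dots> \<le> C * exp (- k * real N) + C * exp (- k * real N)"
        using mn by (intro add_mono tail) auto
      finally show "dist (\<rho> (real m)) (\<rho> (real n)) < e" using N by simp
    qed
  qed
  then obtain l where l: "(\<lambda>n. \<rho> (real n)) \<longlonglongrightarrow> l"
    using Cauchy_convergent_iff convergent_def by blast
  have bound: "norm (\<rho> t - l) \<le> C * exp (- k * t)" if t: "t \<ge> 0" for t
  proof -
    have "((\<lambda>n. norm (\<rho> (real n) - \<rho> t)) \<longlongrightarrow> norm (l - \<rho> t)) sequentially"
      by (intro tendsto_intros l)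
    moreover have "\<forall>\<^sub>F n in sequentially. norm (\<rho> (real n) - \<rho> t) \<le> C * exp (- k * t)"
    proof -
      obtain N :: nat where "t \<le> real N" using real_arch_simple by blast
      then show ?thesis unfolding eventually_sequentially
        by (intro exI[of _ N] allI impI tail t) auto
    qed
    ultimately have "norm (l - \<rho> t) \<le> C * exp (- k * t)"
      by (rule tendsto_upperbound) simp
    then show ?thesis by (simp add: norm_minus_commute)
  qed
  have "((\<lambda>t. \<rho> t - l) \<longlongrightarrow> 0) at_top"
    by (rule Lim_null_comparison[OF _ exp_decay_tendsto[OF k, of C]])
      (unfold eventually_at_top_linorder, rule exI[of _ 0], use bound in auto)
  then show ?thesis by (auto intro: LIM_zero_cancel)
qed

lemma abstract_convergence:
  fixes D G L :: "'a::euclidean_space \<Rightarrow> 'a" and \<rho> :: "real \<Rightarrow> 'a"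
  assumes D: "bounded_linear D" and G: "bounded_linear G"
    and LG: "\<And>x. L x = G (D x)"
    and DL: "\<And>x. D (L x) = L (D x)"
    and sa: "\<And>x y. x \<bullet> D y = D x \<bullet> y"
    and diss: "\<And>x. x \<bullet> L x = - (w / 2) * (norm (D x))\<^sup>2"
    and w: "w > 0"
    and sol: "\<And>t. t \<ge> 0 \<Longrightarrow> (\<rho> has_vector_derivative L (\<rho> t)) (at t within {0..})"
  shows "\<exists>l. (\<rho> \<longlongrightarrow> l) at_top"
proof -
  interpret D: bounded_linear D by (rule D)
  interpret G: bounded_linear G by (rule G)
  have "\<exists>e>0. \<forall>x\<in>range D. norm (D x) \<ge> e * norm x"
  proof (rule injective_imp_isometric)
    show sub: "subspace (range D)"
      using linear_subspace_image[OF D.linear subspace_UNIV] by simp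
    show "closed (range D)" by (rule closed_subspace[OF sub])
    show "\<forall>x\<in>range D. D x = 0 \<longrightarrow> x = 0"
    proof safe
      fix z assume "D (D z) = 0"
      then have "D z \<bullet> D z = 0" using sa[of z "D z"] by simp
      then show "D z = 0" by simp
    qed
  qed (rule D)
  then obtain c where c: "c > 0" "\<And>z. norm (D (D z)) \<ge> c * norm (D z)" by auto
  define k where "k = w * c\<^sup>2"
  have k: "k > 0" unfolding k_def using w c by simp
  define y where "y t = D (\<rho> t)" for t
  define f where "f t = y t \<bullet> y t" for t
  have dy: "(y has_vector_derivative L (y t)) (at t within {0..})" if "t \<ge> 0" for t
    unfolding y_def DL[symmetric] by (rule D.has_vector_derivative[OF sol[OF that]])
  have df: "(f has_real_derivative (- w * (norm (D (y t)))\<^sup>2)) (at t within {0..})" if "t \<ge> 0" for t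
  proof -
    have "(f has_vector_derivative (y t \<bullet> L (y t) + L (y t) \<bullet> y t)) (at t within {0..})"
      unfolding f_def by (rule bounded_bilinear.has_vector_derivative[OF bounded_bilinear_inner dy[OF that] dy[OF that]])
    also have "y t \<bullet> L (y t) + L (y t) \<bullet> y t = - w * (norm (D (y t)))\<^sup>2"
      using diss[of "y t"] by (simp add: inner_commute)
    finally show ?thesis unfolding has_real_derivative_iff_has_vector_derivative .
  qed
  have fle: "- w * (norm (D (y t)))\<^sup>2 \<le> - k * f t" for t
  proof -
    have "c * norm (y t) \<le> norm (D (y t))" using c(2) unfolding y_def .
    then have "(c * norm (y t))\<^sup>2 \<le> (norm (D (y t)))\<^sup>2"
      using c(1) by (intro power_mono) auto
    then have "w * (c * norm (y t))\<^sup>2 \<le> w * (norm (D (y t)))\<^sup>2"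
      using w by (intro mult_left_mono) auto
    then show ?thesis unfolding k_def f_def by (simp add: power_mult_distrib power2_norm_eq_inner)
  qed
  have fdecay: "f t \<le> f 0 * exp (- k * t)" if "t \<ge> 0" for t
    by (rule gronwall_decay[OF df fle that])
  have ydecay: "norm (y t) \<le> norm (y 0) * exp (- (k / 2) * t)" if "t \<ge> 0" for t
  proof (rule power2_le_imp_le)
    have "exp (- k * t) = (exp (- (k / 2) * t))\<^sup>2"
      by (simp add: power2_eq_square exp_add[symmetric])
    then show "(norm (y t))\<^sup>2 \<le> (norm (y 0) * exp (- (k / 2) * t))\<^sup>2"
      using fdecay[OF that] unfolding f_def power2_norm_eq_inner[symmetric]
      by (simp add: power_mult_distrib)
  qed simp
  obtain B where B: "B \<ge> 0" "\<And>x. norm (G x) \<le> norm x * B"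
    using G.nonneg_bounded by blast
  have Lbound: "norm (L (\<rho> t)) \<le> (B * norm (y 0)) * exp (- (k / 2) * t)" if "t \<ge> 0" for t
  proof -
    have "norm (L (\<rho> t)) \<le> norm (y t) * B" unfolding LG y_def by (rule B(2))
    also have "\<dots> \<le> (norm (y 0) * exp (- (k / 2) * t)) * B"
      by (intro mult_right_mono ydecay that B(1))
    finally show ?thesis by (simp add: algebra_simps)
  qed
  have tail: "norm (\<rho> t - \<rho> s) \<le> (B * norm (y 0)) / (k / 2) * exp (- (k / 2) * s)"
    if "0 \<le> s" "s \<le> t" for s t
    by (rule integral_tail_bound[OF sol Lbound]) (use k B that in auto)
  show ?thesis by (rule converges_from_tail[OF tail]) (use k in auto)
qed

lemma mat_eqI: "(\<And>i j. (A::'a^'n^'m) $ i $ j = B $ i $ j) \<Longrightarrow> A = B"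
  by (simp add: vec_eq_iff)

lemma cscale_nth[simp]: "cscale c A $ i $ j = c * A $ i $ j"
  by (simp add: cscale_def)

lemma cadj_nth[simp]: "cadj A $ i $ j = cnj (A $ j $ i)"
  by (simp add: cadj_def)

lemma herm_nth: "hermitian H \<Longrightarrow> cnj (H $ i $ j) = H $ j $ i"
  unfolding hermitian_def by (metis cadj_nth)

lemma mmult_nth: "(A ** B) $ i $ j = (\<Sum>k\<in>UNIV. A $ i $ k * B $ k $ j)"
  by (simp add: matrix_matrix_mult_def)

lemma mmult_diff_left: "((A::'a::comm_ring_1^'n^'m) - B) ** C = A ** C - B ** C"
  by (rule mat_eqI) (simp add: mmult_nth sum_subtractf algebra_simps)
lemma mmult_diff_right: "(A::'a::comm_ring_1^'n^'m) ** (B - C) = A ** B - A ** C"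
  by (rule mat_eqI) (simp add: mmult_nth sum_subtractf algebra_simps)
lemma mmult_add_left: "((A::'a::comm_ring_1^'n^'m) + B) ** C = A ** C + B ** C"
  by (rule mat_eqI) (simp add: mmult_nth sum.distrib algebra_simps)
lemma mmult_add_right: "(A::'a::comm_ring_1^'n^'m) ** (B + C) = A ** B + A ** C"
  by (rule mat_eqI) (simp add: mmult_nth sum.distrib algebra_simps)
lemma mmult_cscale_left: "cscale c A ** B = cscale c (A ** B)"
  by (rule mat_eqI) (simp add: mmult_nth sum_distrib_left algebra_simps)
lemma mmult_cscale_right: "A ** cscale c B = cscale c (A ** B)"
  by (rule mat_eqI) (simp add: mmult_nth sum_distrib_left algebra_simps)

lemma scaleR_cscale: "r *\<^sub>R (A::complex^'n^'n) = cscale (complex_of_real r) A"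
  by (rule mat_eqI) (simp only: vector_scaleR_component, simp add: scaleR_conv_of_real)

lemma comm_add: "commutator H (A + B) = commutator H A + commutator H B"
  unfolding commutator_def by (simp add: mmult_add_left mmult_add_right algebra_simps)
lemma comm_diff: "commutator H (A - B) = commutator H A - commutator H B"
  unfolding commutator_def by (simp add: mmult_diff_left mmult_diff_right algebra_simps)
lemma comm_cscale: "commutator H (cscale c A) = cscale c (commutator H A)"
  unfolding commutator_def by (rule mat_eqI) (simp add: mmult_cscale_left mmult_cscale_right algebra_simps)

lemma linear_comm: "linear (commutator (H::complex^'n^'n))"
  by (rule linearI) (simp_all add: comm_add scaleR_cscale comm_cscale)
lemma bounded_linear_comm: "bounded_linear (commutator (H::complex^'n^'n))"
  using linear_comm linear_conv_bounded_linear by blast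

lemma comm_comm: "commutator H (commutator H X) = (H ** H) ** X - cscale 2 (H ** X ** H) + X ** (H ** H)"
  unfolding commutator_def
  by (rule mat_eqI) (simp add: mmult_diff_left mmult_diff_right matrix_mul_assoc algebra_simps)

lemma gksl_eq:
  assumes "hermitian H"
  shows "gksl \<omega> H X = cscale (- \<i> * complex_of_real (1 - \<omega>)) (commutator H X)
     + cscale (- complex_of_real \<omega> / 2) (commutator H (commutator H X))"
proof -
  have h: "cadj H = H" using assms unfolding hermitian_def .
  show ?thesis
    unfolding gksl_def h comm_comm anticommutator_def
    by (rule mat_eqI) (simp add: algebra_simps)
qed

definition hs :: "complex^'n^'n \<Rightarrow> complex^'n^'n \<Rightarrow> complex" where
  "hs X Y = (\<Sum>i\<in>UNIV. \<Sum>j\<in>UNIV. cnj (X $ i $ j) * Y $ i $ j)"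

lemma inner_hs: "X \<bullet> Y = Re (hs X Y)"
  by (simp add: hs_def inner_vec_def inner_complex_def Re_sum)

lemma hs_cscale_right: "hs X (cscale c Y) = c * hs X Y"
  by (simp add: hs_def sum_distrib_left algebra_simps)
lemma hs_add_right: "hs X (Y + Z) = hs X Y + hs X Z"
  by (simp add: hs_def sum.distrib algebra_simps)
lemma hs_diff_right: "hs X (Y - Z) = hs X Y - hs X Z"
  by (simp add: hs_def sum_subtractf algebra_simps)
lemma hs_diff_left: "hs (X - Y) Z = hs X Z - hs Y Z"
  by (simp add: hs_def sum_subtractf algebra_simps)
lemma hs_cnj: "hs Y X = cnj (hs X Y)"
  by (simp add: hs_def cnj_sum mult.commute)
lemma hs_self: "hs X X = complex_of_real ((norm X)\<^sup>2)"
proof -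
  have "Im (hs X X) = 0"
    by (simp add: hs_def Im_sum)
  moreover have "Re (hs X X) = (norm X)\<^sup>2"
    using inner_hs[of X X] by (simp add: power2_norm_eq_inner)
  ultimately show ?thesis by (simp add: complex_eq_iff)
qed

lemma hs_mult_left:
  assumes "hermitian H"
  shows "hs X (H ** Y) = hs (H ** X) Y"
proof -
  have "hs X (H ** Y) = (\<Sum>i\<in>UNIV. \<Sum>j\<in>UNIV. \<Sum>k\<in>UNIV. cnj (X $ i $ j) * H $ i $ k * Y $ k $ j)"
    by (simp add: hs_def mmult_nth sum_distrib_left mult.assoc)
  also have "\<dots> = (\<Sum>k\<in>UNIV. \<Sum>j\<in>UNIV. \<Sum>i\<in>UNIV. cnj (X $ i $ j) * H $ i $ k * Y $ k $ j)"
  proof -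
    have "\<And>f. (\<Sum>i\<in>(UNIV::'n set). \<Sum>j\<in>(UNIV::'n set). \<Sum>k\<in>(UNIV::'n set). f i j k :: complex)
       = (\<Sum>k\<in>UNIV. \<Sum>j\<in>UNIV. \<Sum>i\<in>UNIV. f i j k)"
    proof -
      fix f :: "'n \<Rightarrow> 'n \<Rightarrow> 'n \<Rightarrow> complex"
      have "(\<Sum>i\<in>UNIV. \<Sum>j\<in>UNIV. \<Sum>k\<in>UNIV. f i j k) = (\<Sum>i\<in>UNIV. \<Sum>k\<in>UNIV. \<Sum>j\<in>UNIV. f i j k)"
        by (rule sum.cong[OF refl], rule sum.swap)
      also have "\<dots> = (\<Sum>k\<in>UNIV. \<Sum>i\<in>UNIV. \<Sum>j\<in>UNIV. f i j k)"
        by (rule sum.swap)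
      also have "\<dots> = (\<Sum>k\<in>UNIV. \<Sum>j\<in>UNIV. \<Sum>i\<in>UNIV. f i j k)"
        by (rule sum.cong[OF refl], rule sum.swap)
      finally show "?thesis f" .
    qed
    then show ?thesis .
  qed
  also have "\<dots> = hs (H ** X) Y"
    by (simp add: hs_def mmult_nth sum_distrib_right sum_distrib_left cnj_sum herm_nth[OF assms] algebra_simps)
  finally show ?thesis .
qed

lemma hs_mult_right:
  assumes "hermitian H"
  shows "hs X (Y ** H) = hs (X ** H) Y"
proof -
  have "hs X (Y ** H) = (\<Sum>i\<in>UNIV. \<Sum>j\<in>UNIV. \<Sum>k\<in>UNIV. cnj (X $ i $ j) * Y $ i $ k * H $ k $ j)"
    by (simp add: hs_def mmult_nth sum_distrib_left mult.assoc)
  also have "\<dots> = (\<Sum>i\<in>UNIV. \<Sum>k\<in>UNIV. \<Sum>j\<in>UNIV. cnj (X $ i $ j) * Y $ i $ k * H $ k $ j)"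
    by (rule sum.cong[OF refl], rule sum.swap)
  also have "\<dots> = hs (X ** H) Y"
    by (simp add: hs_def mmult_nth sum_distrib_right sum_distrib_left cnj_sum herm_nth[OF assms] algebra_simps)
  finally show ?thesis .
qed

lemma hs_comm:
  assumes "hermitian H"
  shows "hs X (commutator H Y) = hs (commutator H X) Y"
  unfolding commutator_def hs_diff_right hs_diff_left hs_mult_left[OF assms] hs_mult_right[OF assms] ..

lemma inner_comm:
  assumes "hermitian H"
  shows "X \<bullet> commutator H Y = commutator H X \<bullet> Y"
  by (simp add: inner_hs hs_comm[OF assms])

lemma gksl_diss:
  assumes "hermitian H"
  shows "X \<bullet> gksl \<omega> H X = - (\<omega> / 2) * (norm (commutator H X))\<^sup>2"
proof -
  define r where "r = hs X (commutator H X)"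
  have "r = cnj r" unfolding r_def by (metis hs_cnj hs_comm[OF assms])
  then have r: "Im r = 0" by (metis complex_cnj_cancel_iff complex_cnj_zero_iff cnj.simps(2) neg_equal_zero)
  have "hs X (gksl \<omega> H X) = (- \<i> * complex_of_real (1 - \<omega>)) * r
      + (- complex_of_real \<omega> / 2) * complex_of_real ((norm (commutator H X))\<^sup>2)"
    unfolding gksl_eq[OF assms] hs_add_right hs_cscale_right r_def hs_comm[OF assms, of X "commutator H X"] hs_self ..
  then show ?thesis using r unfolding inner_hs by simp
qed

lemma cscale_zero[simp]: "cscale c 0 = 0"
  by (rule mat_eqI) simp
lemma comm_zero[simp]: "commutator H 0 = 0"
  unfolding commutator_def by (rule mat_eqI) (simp add: mmult_nth)

lemma gksl_zero_iff:
  assumes "hermitian H" "\<omega> > 0"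
  shows "gksl \<omega> H X = 0 \<longleftrightarrow> commutator H X = 0"
proof
  assume "gksl \<omega> H X = 0"
  then have "- (\<omega> / 2) * (norm (commutator H X))\<^sup>2 = 0"
    using gksl_diss[OF assms(1), of X \<omega>] by simp
  then show "commutator H X = 0" using assms(2) by simp
next
  assume "commutator H X = 0"
  then show "gksl \<omega> H X = 0"
    unfolding gksl_eq[OF assms(1)] by simp
qed

lemma ham_zero_iff: "hamiltonian_rhs H X = 0 \<longleftrightarrow> commutator H X = 0"
proof
  assume "hamiltonian_rhs H X = 0"
  then have "cscale \<i> (hamiltonian_rhs H X) = 0" by (simp add: cscale_def zero_vec_def)
  moreover have "cscale \<i> (hamiltonian_rhs H X) = commutator H X"
    unfolding hamiltonian_rhs_def by (rule mat_eqI) simp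
  ultimately show "commutator H X = 0" by simp
next
  assume "commutator H X = 0"
  then show "hamiltonian_rhs H X = 0"
    unfolding hamiltonian_rhs_def by (simp add: cscale_def zero_vec_def)
qed

lemma comm_zero_iff: "commutator H X = 0 \<longleftrightarrow> H ** X = X ** H"
  unfolding commutator_def by simp

definition Gop :: "real \<Rightarrow> complex^'n^'n \<Rightarrow> complex^'n^'n \<Rightarrow> complex^'n^'n" where
  "Gop \<omega> H X = cscale (- \<i> * complex_of_real (1 - \<omega>)) X + cscale (- complex_of_real \<omega> / 2) (commutator H X)"

lemma cscale_add: "cscale c (A + B) = cscale c A + cscale c B"
  by (rule mat_eqI) (simp add: algebra_simps)
lemma cscale_cscale: "cscale c (cscale d A) = cscale d (cscale c A)"
  by (rule mat_eqI) (simp add: algebra_simps)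

lemma bounded_linear_Gop: "bounded_linear (Gop \<omega> (H::complex^'n^'n))"
proof -
  have "linear (Gop \<omega> H)"
    by (rule linearI) (simp_all add: Gop_def comm_add scaleR_cscale comm_cscale cscale_add cscale_cscale)
  then show ?thesis using linear_conv_bounded_linear by blast
qed

lemma gksl_Gop: "hermitian H \<Longrightarrow> gksl \<omega> H X = Gop \<omega> H (commutator H X)"
  unfolding gksl_eq Gop_def by simp

lemma comm_gksl: "hermitian H \<Longrightarrow> commutator H (gksl \<omega> H X) = gksl \<omega> H (commutator H X)"
  unfolding gksl_eq by (simp add: comm_add comm_cscale)

lemma bounded_linear_gksl: "hermitian H \<Longrightarrow> bounded_linear (gksl \<omega> (H::complex^'n^'n))"
proof -
  assume h: "hermitian H"
  have "gksl \<omega> H = Gop \<omega> H \<circ> commutator H" using gksl_Gop[OF h] by auto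
  then show ?thesis using bounded_linear_compose[OF bounded_linear_Gop bounded_linear_comm]
    by (simp add: o_def)
qed

lemma part3:
  assumes h: "hermitian H" and w: "\<omega> > 0"
  shows "(\<exists>\<rho>. solution (gksl \<omega> H) \<rho>0 \<rho>) \<and>
            (\<forall>\<rho>. solution (gksl \<omega> H) \<rho>0 \<rho> \<longrightarrow> (\<exists>\<rho>inf. (\<rho> \<longlongrightarrow> \<rho>inf) at_top))"
proof
  show "\<exists>\<rho>. solution (gksl \<omega> H) \<rho>0 \<rho>"
    using linear_ode_exists[OF bounded_linear_gksl[OF h], of \<rho>0 \<omega> "{0..}"]
    unfolding solution_def by blast
  show "\<forall>\<rho>. solution (gksl \<omega> H) \<rho>0 \<rho> \<longrightarrow> (\<exists>\<rho>inf. (\<rho> \<longlongrightarrow> \<rho>inf) at_top)"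
  proof safe
    fix \<rho> assume "solution (gksl \<omega> H) \<rho>0 \<rho>"
    then have sol: "\<And>t. t \<ge> 0 \<Longrightarrow> (\<rho> has_vector_derivative gksl \<omega> H (\<rho> t)) (at t within {0..})"
      unfolding solution_def by blast
    show "\<exists>\<rho>inf. (\<rho> \<longlongrightarrow> \<rho>inf) at_top"
      by (rule abstract_convergence[OF bounded_linear_comm bounded_linear_Gop gksl_Gop[OF h]
            comm_gksl[OF h] inner_comm[OF h] gksl_diss[OF h] w sol])
  qed
qed

definition sq :: "complex^'n^'n \<Rightarrow> complex^'n^'n" where
  "sq M = cscale (complex_of_real (1 / (norm M)\<^sup>2)) (M ** M)"

lemma sq_density:
  fixes M :: "complex^'n^'n"
  assumes h: "hermitian M" and nz: "M \<noteq> 0"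
  shows "density_matrix (sq M)"
proof -
  define s where "s = 1 / (norm M)\<^sup>2"
  have s: "s > 0" using nz unfolding s_def by simp
  have herm: "hermitian (sq M)"
    unfolding hermitian_def sq_def s_def[symmetric]
    by (rule mat_eqI) (simp add: mmult_nth cnj_sum herm_nth[OF h] mult.commute)
  have quad: "0 \<le> Re (\<Sum>i\<in>UNIV. \<Sum>j\<in>UNIV. cnj (x $ i) * sq M $ i $ j * x $ j)" for x :: "complex^'n"
  proof -
    define v where "v k = (\<Sum>j\<in>UNIV. M $ k $ j * x $ j)" for k
    have cv: "(\<Sum>i\<in>UNIV. cnj (x $ i) * M $ i $ k) = cnj (v k)" for k
      unfolding v_def by (simp add: cnj_sum herm_nth[OF h] mult.commute)
    have "(\<Sum>i\<in>UNIV. \<Sum>j\<in>UNIV. cnj (x $ i) * sq M $ i $ j * x $ j)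
        = complex_of_real s * (\<Sum>i\<in>UNIV. \<Sum>j\<in>UNIV. \<Sum>k\<in>UNIV. cnj (x $ i) * M $ i $ k * (M $ k $ j * x $ j))"
    proof -
      have pt: "cnj (x $ i) * sq M $ i $ j * x $ j
          = complex_of_real s * (\<Sum>k\<in>UNIV. cnj (x $ i) * M $ i $ k * (M $ k $ j * x $ j))" for i j
        unfolding sq_def s_def[symmetric] cscale_nth mmult_nth
        by (simp add: sum_distrib_left sum_distrib_right mult_ac)
      show ?thesis unfolding pt by (simp add: sum_distrib_left)
    qed
    also have "(\<Sum>i\<in>UNIV. \<Sum>j\<in>UNIV. \<Sum>k\<in>UNIV. cnj (x $ i) * M $ i $ k * (M $ k $ j * x $ j))
        = (\<Sum>k\<in>UNIV. (\<Sum>i\<in>UNIV. cnj (x $ i) * M $ i $ k) * (\<Sum>j\<in>UNIV. M $ k $ j * x $ j))"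
    proof -
      have "(\<Sum>i\<in>UNIV. \<Sum>j\<in>UNIV. \<Sum>k\<in>UNIV. cnj (x $ i) * M $ i $ k * (M $ k $ j * x $ j))
          = (\<Sum>i\<in>UNIV. \<Sum>k\<in>UNIV. \<Sum>j\<in>UNIV. cnj (x $ i) * M $ i $ k * (M $ k $ j * x $ j))"
        by (rule sum.cong[OF refl], rule sum.swap)
      also have "\<dots> = (\<Sum>k\<in>UNIV. \<Sum>i\<in>UNIV. \<Sum>j\<in>UNIV. cnj (x $ i) * M $ i $ k * (M $ k $ j * x $ j))"
        by (rule sum.swap)
      also have "\<dots> = (\<Sum>k\<in>UNIV. (\<Sum>i\<in>UNIV. cnj (x $ i) * M $ i $ k) * (\<Sum>j\<in>UNIV. M $ k $ j * x $ j))"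
        by (simp only: sum_product)
      finally show ?thesis .
    qed
    also have "\<dots> = (\<Sum>k\<in>UNIV. cnj (v k) * v k)"
      unfolding cv v_def ..
    finally have eq: "(\<Sum>i\<in>UNIV. \<Sum>j\<in>UNIV. cnj (x $ i) * sq M $ i $ j * x $ j)
        = complex_of_real s * (\<Sum>k\<in>UNIV. cnj (v k) * v k)" .
    have "Re (complex_of_real s * (\<Sum>k\<in>UNIV. cnj (v k) * v k)) = s * (\<Sum>k\<in>UNIV. Re (cnj (v k) * v k))"
      by (simp add: Re_sum sum_distrib_left)
    moreover have "0 \<le> s * (\<Sum>k\<in>UNIV. Re (cnj (v k) * v k))"
      using s by (intro mult_nonneg_nonneg sum_nonneg) auto
    ultimately show ?thesis unfolding eq by simp
  qed
  have tr: "mtrace (sq M) = 1"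
  proof -
    have "mtrace (sq M) = complex_of_real s * hs M M"
      unfolding mtrace_def sq_def s_def[symmetric] hs_def
      by (simp add: mmult_nth sum_distrib_left herm_nth[OF h] mult.commute)
    also have "\<dots> = 1" unfolding hs_self s_def using nz by simp
    finally show ?thesis .
  qed
  show ?thesis unfolding density_matrix_def psd_def using herm quad tr by blast
qed

definition scalar :: "complex^'n^'n \<Rightarrow> bool" where
  "scalar A \<longleftrightarrow> (\<exists>c. \<forall>i j. A $ i $ j = (if i = j then c else 0))"

lemma scalar_comm:
  assumes "scalar H" shows "H ** X = X ** H"
proof -
  obtain c where c: "\<And>i j. H $ i $ j = (if i = j then c else 0)"
    using assms unfolding scalar_def by blast
  show ?thesis by (rule mat_eqI) (simp add: mmult_nth c if_distrib if_distribR mult.commute cong: if_cong)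
qed

lemma sq_comm:
  assumes hm: "H ** M = M ** H" shows "H ** sq M = sq M ** H"
proof -
  have "H ** (M ** M) = (H ** M) ** M" by (simp add: matrix_mul_assoc)
  also have "\<dots> = (M ** H) ** M" using hm by simp
  also have "\<dots> = M ** (H ** M)" by (simp add: matrix_mul_assoc)
  also have "\<dots> = M ** (M ** H)" using hm by simp
  also have "\<dots> = (M ** M) ** H" by (simp add: matrix_mul_assoc)
  finally show ?thesis unfolding sq_def mmult_cscale_left mmult_cscale_right by simp
qed

lemma mat1_nth: "(mat 1 :: complex^'n^'n) $ i $ j = (if i = j then 1 else 0)"
  by (simp add: mat_def)

lemma herm_mat1: "hermitian (mat 1 :: complex^'n^'n)"
  unfolding hermitian_def by (rule mat_eqI) (simp add: mat1_nth)

lemma mat1_nz: "(mat 1 :: complex^'n^'n) \<noteq> 0"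
  by (metis mat1_nth zero_index one_neq_zero)

lemma scalar_sq_mat1: "scalar (sq (mat 1 :: complex^'n^'n))"
  unfolding scalar_def sq_def by (auto simp: mat1_nth)

lemma scalar_sq:
  fixes M :: "complex^'n^'n"
  assumes "scalar (sq M)" shows "scalar (M ** M)"
proof -
  obtain c where c: "\<And>i j. sq M $ i $ j = (if i = j then c else 0)"
    using assms unfolding scalar_def by blast
  show ?thesis
  proof (cases "M = 0")
    case True then show ?thesis unfolding scalar_def by (auto simp: mmult_nth)
  next
    case False
    then have nz: "complex_of_real (1 / (norm M)\<^sup>2) \<noteq> 0" by simp
    have "(M ** M) $ i $ j = (if i = j then c / complex_of_real (1 / (norm M)\<^sup>2) else 0)" for i j
      using c[of i j] nz unfolding sq_def cscale_nth by (auto simp: field_simps split: if_splits)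
    then show ?thesis unfolding scalar_def by blast
  qed
qed

definition Eu :: "'n \<Rightarrow> complex^'n^'n" where
  "Eu a = (\<chi> i j. if i = a \<and> j = a then 1 else 0)"

lemma Eu_herm: "hermitian (Eu a)"
  unfolding hermitian_def Eu_def by (rule mat_eqI) auto

lemma Eu_aa: "Eu a $ a $ a = 1"
  by (simp add: Eu_def)

lemma Eu_nz: "Eu a \<noteq> 0"
proof
  assume "Eu a = 0"
  then have "Eu a $ a $ a = 0" by simp
  then show False by (simp add: Eu_aa)
qed

lemma sq_Eu_aa: "sq (Eu a) $ a $ a \<noteq> 0"
proof -
  have "(Eu a ** Eu a) $ a $ a = 1"
    unfolding mmult_nth Eu_def by (simp add: if_distrib cong: if_cong)
  moreover have "norm (Eu a) \<noteq> 0" using Eu_nz by simp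
  ultimately show ?thesis unfolding sq_def by simp
qed

lemma sq_Eu_ab: "b \<noteq> a \<Longrightarrow> sq (Eu b) $ a $ a = 0"
  unfolding sq_def cscale_nth mmult_nth Eu_def by simp

lemma trace_unique:
  assumes "CARD('n) \<le> 1" "mtrace (A :: complex^'n^'n) = 1" "mtrace B = 1"
  shows "A = B"
proof -
  have "CARD('n) \<noteq> 0" by simp
  then have "CARD('n) = 1" using assms(1) by linarith
  then obtain a :: 'n where a: "UNIV = {a}" using card_1_singletonE by blast
  then have ij: "i = a" for i :: 'n by blast
  have "A $ a $ a = 1" "B $ a $ a = 1" using assms(2,3) unfolding mtrace_def a by simp_all
  show ?thesis
  proof (rule mat_eqI)
    fix i j :: 'n
    show "A $ i $ j = B $ i $ j" using ij[of i] ij[of j] \<open>A $ a $ a = 1\<close> \<open>B $ a $ a = 1\<close> by simp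
  qed
qed

lemma get_M:
  fixes H :: "complex^'n^'n"
  assumes h: "hermitian H" and ns: "\<not> scalar H"
  shows "\<exists>M. hermitian M \<and> \<not> scalar (M ** M) \<and> H ** M = M ** H"
proof (cases "scalar (H ** H)")
  case False
  then show ?thesis using h by blast
next
  case True
  then obtain c where c: "\<And>i j. (H ** H) $ i $ j = (if i = j then c else 0)"
    unfolding scalar_def by blast
  define M where "M = H - mat 1"
  have hM: "hermitian M"
    unfolding hermitian_def M_def by (rule mat_eqI) (simp add: herm_nth[OF h] mat1_nth)
  have cM: "H ** M = M ** H"
    unfolding M_def by (simp add: mmult_diff_left mmult_diff_right)
  have MM: "M ** M = (H ** H - H) - (H - mat 1)"
    unfolding M_def by (simp add: mmult_diff_left mmult_diff_right)
  have "\<not> scalar (M ** M)"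
  proof
    assume "scalar (M ** M)"
    then obtain d where d: "\<And>i j. (M ** M) $ i $ j = (if i = j then d else 0)"
      unfolding scalar_def by blast
    have "H $ i $ j = (if i = j then (c + 1 - d) / 2 else 0)" for i j
    proof -
      have "(M ** M) $ i $ j = (H ** H) $ i $ j - 2 * H $ i $ j + (if i = j then 1 else 0)"
        unfolding MM by (simp add: mat1_nth)
      then show ?thesis using c[of i j] d[of i j] by (auto simp: field_simps split: if_splits)
    qed
    then have "scalar H" unfolding scalar_def by blast
    then show False using ns by simp
  qed
  then show ?thesis using hM cM by blast
qed

lemma exists_two:
  fixes H :: "complex^'n^'n"
  assumes h: "hermitian H" and card: "CARD('n) > 1"
  shows "\<exists>\<rho>1 \<rho>2. \<rho>1 \<noteq> \<rho>2 \<and> density_matrix \<rho>1 \<and> density_matrix \<rho>2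
     \<and> H ** \<rho>1 = \<rho>1 ** H \<and> H ** \<rho>2 = \<rho>2 ** H"
proof (cases "scalar H")
  case True
  obtain a b :: 'n where ab: "a \<noteq> b"
  proof -
    have "\<not> (\<forall>a1\<in>(UNIV::'n set). \<forall>a2\<in>UNIV. a1 = a2)"
      using card card_le_Suc0_iff_eq[of "UNIV::'n set"] by auto
    then show ?thesis using that by blast
  qed
  have "sq (Eu a) \<noteq> sq (Eu b)"
    using sq_Eu_aa[of a] sq_Eu_ab[of b a] ab by auto
  then show ?thesis
    using sq_density[OF Eu_herm Eu_nz] scalar_comm[OF True] by blast
next
  case False
  obtain M where M: "hermitian M" "\<not> scalar (M ** M)" "H ** M = M ** H"
    using get_M[OF h False] by blast
  have nz: "M \<noteq> 0"
  proof
    assume "M = 0"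
    then have "scalar (M ** M)" unfolding scalar_def by (auto simp: mmult_nth)
    then show False using M(2) by simp
  qed
  have "sq (mat 1) \<noteq> sq M"
    using scalar_sq_mat1 scalar_sq M(2) by metis
  moreover have "H ** sq (mat 1) = sq (mat 1) ** H" by (rule sq_comm) simp
  ultimately show ?thesis
    using sq_density[OF herm_mat1 mat1_nz] sq_density[OF M(1) nz] sq_comm[OF M(3)] by blast
qed

theorem theorem3:
  fixes H :: "complex^'n^'n" and \<omega> :: real
  assumes "hermitian H" and "0 < \<omega>" and "\<omega> \<le> 1"
  shows "(\<forall>\<rho>. stationary_state (gksl \<omega> H) \<rho> \<longleftrightarrow> stationary_state (hamiltonian_rhs H) \<rho>)
       \<and> (\<forall>\<rho>. stationary_state (hamiltonian_rhs H) \<rho> \<longleftrightarrow> density_matrix \<rho> \<and> H ** \<rho> = \<rho> ** H)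
       \<and> (\<forall>\<rho>0. density_matrix \<rho>0 \<longrightarrow>
            (\<exists>\<rho>. solution (gksl \<omega> H) \<rho>0 \<rho>) \<and>
            (\<forall>\<rho>. solution (gksl \<omega> H) \<rho>0 \<rho> \<longrightarrow> (\<exists>\<rho>inf. (\<rho> \<longlongrightarrow> \<rho>inf) at_top)))
       \<and> ((\<exists>\<rho>1 \<rho>2. \<rho>1 \<noteq> \<rho>2 \<and> stationary_state (gksl \<omega> H) \<rho>1 \<and> stationary_state (gksl \<omega> H) \<rho>2)
            \<longleftrightarrow> CARD('n) > 1)"
proof -
  have sg: "stationary_state (gksl \<omega> H) \<rho> \<longleftrightarrow> density_matrix \<rho> \<and> H ** \<rho> = \<rho> ** H" for \<rho>
    unfolding stationary_state_def gksl_zero_iff[OF assms(1,2)] comm_zero_iff ..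
  have sh: "stationary_state (hamiltonian_rhs H) \<rho> \<longleftrightarrow> density_matrix \<rho> \<and> H ** \<rho> = \<rho> ** H" for \<rho>
    unfolding stationary_state_def ham_zero_iff comm_zero_iff ..
  have p4: "(\<exists>\<rho>1 \<rho>2. \<rho>1 \<noteq> \<rho>2 \<and> stationary_state (gksl \<omega> H) \<rho>1 \<and> stationary_state (gksl \<omega> H) \<rho>2)
            \<longleftrightarrow> CARD('n) > 1"
  proof
    assume "\<exists>\<rho>1 \<rho>2. \<rho>1 \<noteq> \<rho>2 \<and> stationary_state (gksl \<omega> H) \<rho>1 \<and> stationary_state (gksl \<omega> H) \<rho>2"
    then obtain \<rho>1 \<rho>2 :: "complex^'n^'n" where r: "\<rho>1 \<noteq> \<rho>2" "density_matrix \<rho>1" "density_matrix \<rho>2"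
      unfolding sg by blast
    show "CARD('n) > 1"
    proof (rule ccontr)
      assume "\<not> CARD('n) > 1"
      then have "\<rho>1 = \<rho>2" using trace_unique[of \<rho>1 \<rho>2] r(2,3) unfolding density_matrix_def by simp
      then show False using r(1) by simp
    qed
  next
    assume "CARD('n) > 1"
    then show "\<exists>\<rho>1 \<rho>2. \<rho>1 \<noteq> \<rho>2 \<and> stationary_state (gksl \<omega> H) \<rho>1 \<and> stationary_state (gksl \<omega> H) \<rho>2"
      unfolding sg using exists_two[OF assms(1)] by blast
  qed
  have p3: "\<forall>\<rho>0. density_matrix \<rho>0 \<longrightarrow>
            (\<exists>\<rho>. solution (gksl \<omega> H) \<rho>0 \<rho>) \<and>
            (\<forall>\<rho>. solution (gksl \<omega> H) \<rho>0 \<rho> \<longrightarrow> (\<exists>\<rho>inf. (\<rho> \<longlongrightarrow> \<rho>inf) at_top))"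
    using part3[OF assms(1,2)] by blast
  have p1: "\<forall>\<rho>. stationary_state (gksl \<omega> H) \<rho> \<longleftrightarrow> stationary_state (hamiltonian_rhs H) \<rho>"
    unfolding sg sh by simp
  have p2: "\<forall>\<rho>. stationary_state (hamiltonian_rhs H) \<rho> \<longleftrightarrow> density_matrix \<rho> \<and> H ** \<rho> = \<rho> ** H"
    unfolding sh by simp
  show ?thesis using p1 p2 p3 p4 by (intro conjI)
qed

end
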